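(* Let $M\subsetneq F$ be a graded submodule, $\prec$ a monomial order on $F$, and $G$ a homogeneous Gröbner basis of $M$ with respect to $\prec$. Then $N_M$ admits an $l$-standard cone decomposition $Q$ such that \[ G'=\{g\in G:\deg(g)\le\max\{1+\deg(Q),\,l\}\} \] is also a Gröbner basis of $M$ with respect to $\prec$. In particular, the reduced Gröbner basis of $M$ with respect to $\prec$ has degree at most $\max\{1+\deg(Q),l\}$.
   Context: Standing notation. $S=\mathbb{K}[x_1,\dots,x_n]$ is standard graded, and $F=Se_1\oplus\cdots\oplus Se_m$ is a graded free module with $\deg(e_j)\ge0$ integers; $l=\max_j\deg(e_j)$. Monomials of $F$ are $x^\alpha e_j$ of degree $|\alpha|+\deg(e_j)$. For a monomial order $\prec$ and a submodule $M$, $N_M$ is the $\mathbb{K}$-span of the monomials of $F$ not in $\mathrm{in}_\prec(M)$. Cones. For a homogeneous $h\in F$ and $u\subseteq\{x_1,\dots,x_n\}$, the cone $C(h,u)=h\,\mathbb{K}[u]$ has degree $\deg(h)$ and dimension $|u|$. A cone decomposition of a $\mathbb{K}$-subspace $T\subseteq F$ is a finite set $P$ of cones with $T=\bigoplus_{C\in P}C$ as $\mathbb{K}$-vector spaces; $\deg(P)=\max_{C\in P}\deg(C)$, and $P^+=\{C\in P:\dim C>0\}$. $P$ is $q$-standard if (1) no $C\in P^+$ has $\deg(C)<q$, and (2) for every $C\in P^+$ and every integer $d$ with $q\le d\le\deg(C)$ there is $C'\in P$ with $\deg(C')=d$ and $\dim(C')\ge\dim(C)$. *)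

theory Defs
  imports "HOL-Library.Poly_Mapping"
begin

text \<open>
  The variables x_1,...,x_n are the elements of a finite type 'v.
  A monomial of S = K[x_1..x_n] is an exponent vector ('v to nat, finitely supported).
  The basis vectors e_1,...,e_m of F are the elements of a finite type 'j,
  with degrees given by d :: 'j \<Rightarrow> nat.  A monomial x^a e_j of F is the pair (a, j).
  Polynomials of S are finitely supported maps (monomial to K), and
  elements of F are finitely supported maps (monomial of F to K).
\<close>

type_synonym 'v mon = "'v \<Rightarrow>\<^sub>0 nat"
type_synonym ('v, 'j) fterm = "('v \<Rightarrow>\<^sub>0 nat) \<times> 'j"

definition mon_deg :: "'v mon \<Rightarrow> nat" where
  "mon_deg a = (\<Sum>v\<in>Poly_Mapping.keys a. Poly_Mapping.lookup a v)"

definition term_deg :: "('j \<Rightarrow> nat) \<Rightarrow> ('v, 'j) fterm \<Rightarrow> nat" where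
  "term_deg d u = mon_deg (fst u) + d (snd u)"

definition tshift :: "'v mon \<Rightarrow> ('v, 'j) fterm \<Rightarrow> ('v, 'j) fterm" where
  "tshift t u = (t + fst u, snd u)"

definition tdvd :: "('v, 'j) fterm \<Rightarrow> ('v, 'j) fterm \<Rightarrow> bool" where
  "tdvd u w \<longleftrightarrow> (\<exists>t. w = tshift t u)"

definition mod_mult :: "('v mon \<Rightarrow>\<^sub>0 'k::comm_ring_1) \<Rightarrow> (('v, 'j) fterm \<Rightarrow>\<^sub>0 'k)
    \<Rightarrow> (('v, 'j) fterm \<Rightarrow>\<^sub>0 'k)" where
  "mod_mult p f = (\<Sum>t\<in>Poly_Mapping.keys p. \<Sum>u\<in>Poly_Mapping.keys f.
      Poly_Mapping.single (tshift t u) (Poly_Mapping.lookup p t * Poly_Mapping.lookup f u))"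

definition is_submodule :: "(('v, 'j) fterm \<Rightarrow>\<^sub>0 'k::comm_ring_1) set \<Rightarrow> bool" where
  "is_submodule M \<longleftrightarrow> 0 \<in> M \<and> (\<forall>f\<in>M. \<forall>g\<in>M. f + g \<in> M) \<and>
     (\<forall>p. \<forall>f\<in>M. mod_mult p f \<in> M)"

text \<open>Homogeneous of degree k (0 is homogeneous of every degree).\<close>
definition homog_of :: "('j \<Rightarrow> nat) \<Rightarrow> nat \<Rightarrow> (('v, 'j) fterm \<Rightarrow>\<^sub>0 'k::zero) \<Rightarrow> bool" where
  "homog_of d k f \<longleftrightarrow> (\<forall>u\<in>Poly_Mapping.keys f. term_deg d u = k)"

definition homogeneous :: "('j \<Rightarrow> nat) \<Rightarrow> (('v, 'j) fterm \<Rightarrow>\<^sub>0 'k::zero) \<Rightarrow> bool" where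
  "homogeneous d f \<longleftrightarrow> (\<exists>k. homog_of d k f)"

text \<open>Degree of an element: the maximal degree of its monomials (0 for f = 0);
  for a nonzero homogeneous element this is its degree.\<close>
definition elem_deg :: "('j \<Rightarrow> nat) \<Rightarrow> (('v, 'j) fterm \<Rightarrow>\<^sub>0 'k::zero) \<Rightarrow> nat" where
  "elem_deg d f = Max (insert 0 (term_deg d ` Poly_Mapping.keys f))"

definition hcomp :: "('j \<Rightarrow> nat) \<Rightarrow> nat \<Rightarrow> (('v, 'j) fterm \<Rightarrow>\<^sub>0 'k::comm_monoid_add)
    \<Rightarrow> (('v, 'j) fterm \<Rightarrow>\<^sub>0 'k)" where
  "hcomp d k f = (\<Sum>u\<in>{u\<in>Poly_Mapping.keys f. term_deg d u = k}. Poly_Mapping.single u (Poly_Mapping.lookup f u))"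

definition graded_submodule :: "('j \<Rightarrow> nat) \<Rightarrow> (('v, 'j) fterm \<Rightarrow>\<^sub>0 'k::comm_ring_1) set \<Rightarrow> bool" where
  "graded_submodule d M \<longleftrightarrow> is_submodule M \<and> (\<forall>f\<in>M. \<forall>k. hcomp d k f \<in> M)"

text \<open>Monomial order on F, given as a strict order \<open>ord u w\<close> meaning u \<prec> w:
  a well-founded strict total order, compatible with multiplication by monomials,
  and with u \<prec> x^t u for t \<noteq> 0.\<close>
definition monomial_order :: "(('v, 'j) fterm \<Rightarrow> ('v, 'j) fterm \<Rightarrow> bool) \<Rightarrow> bool" where
  "monomial_order ord \<longleftrightarrow>
     (\<forall>u. \<not> ord u u) \<and> (\<forall>u v w. ord u v \<longrightarrow> ord v w \<longrightarrow> ord u w) \<and>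
     (\<forall>u v. u \<noteq> v \<longrightarrow> ord u v \<or> ord v u) \<and> wfP ord \<and>
     (\<forall>u v t. ord u v \<longrightarrow> ord (tshift t u) (tshift t v)) \<and>
     (\<forall>u t. t \<noteq> 0 \<longrightarrow> ord u (tshift t u))"

definition lt :: "(('v, 'j) fterm \<Rightarrow> ('v, 'j) fterm \<Rightarrow> bool) \<Rightarrow> (('v, 'j) fterm \<Rightarrow>\<^sub>0 'k::zero)
    \<Rightarrow> ('v, 'j) fterm" where
  "lt ord f = (THE u. u \<in> Poly_Mapping.keys f \<and> (\<forall>w\<in>Poly_Mapping.keys f. w \<noteq> u \<longrightarrow> ord w u))"

definition lc :: "(('v, 'j) fterm \<Rightarrow> ('v, 'j) fterm \<Rightarrow> bool) \<Rightarrow> (('v, 'j) fterm \<Rightarrow>\<^sub>0 'k::zero) \<Rightarrow> 'k" where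
  "lc ord f = Poly_Mapping.lookup f (lt ord f)"

text \<open>The monomials of the initial module in(M), i.e. of the submodule generated by the
  leading monomials of the nonzero elements of M.\<close>
definition init_terms :: "(('v, 'j) fterm \<Rightarrow> ('v, 'j) fterm \<Rightarrow> bool) \<Rightarrow> (('v, 'j) fterm \<Rightarrow>\<^sub>0 'k::zero) set
    \<Rightarrow> ('v, 'j) fterm set" where
  "init_terms ord M = {w. \<exists>g\<in>M. g \<noteq> 0 \<and> tdvd (lt ord g) w}"

definition normal_space :: "(('v, 'j) fterm \<Rightarrow> ('v, 'j) fterm \<Rightarrow> bool) \<Rightarrow> (('v, 'j) fterm \<Rightarrow>\<^sub>0 'k::zero) set
    \<Rightarrow> (('v, 'j) fterm \<Rightarrow>\<^sub>0 'k) set" where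
  "normal_space ord M = {f. Poly_Mapping.keys f \<inter> init_terms ord M = {}}"

definition groebner_basis :: "(('v, 'j) fterm \<Rightarrow> ('v, 'j) fterm \<Rightarrow> bool) \<Rightarrow> (('v, 'j) fterm \<Rightarrow>\<^sub>0 'k::zero) set
    \<Rightarrow> (('v, 'j) fterm \<Rightarrow>\<^sub>0 'k) set \<Rightarrow> bool" where
  "groebner_basis ord M G \<longleftrightarrow> finite G \<and> G \<subseteq> M \<and>
     (\<forall>f\<in>M. f \<noteq> 0 \<longrightarrow> (\<exists>g\<in>G. g \<noteq> 0 \<and> tdvd (lt ord g) (lt ord f)))"

definition reduced_groebner_basis :: "(('v, 'j) fterm \<Rightarrow> ('v, 'j) fterm \<Rightarrow> bool)
    \<Rightarrow> (('v, 'j) fterm \<Rightarrow>\<^sub>0 'k::{zero,one}) set \<Rightarrow> (('v, 'j) fterm \<Rightarrow>\<^sub>0 'k) set \<Rightarrow> bool" where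
  "reduced_groebner_basis ord M G \<longleftrightarrow> groebner_basis ord M G \<and>
     (\<forall>g\<in>G. g \<noteq> 0 \<and> lc ord g = 1) \<and>
     (\<forall>g\<in>G. \<forall>g'\<in>G. g' \<noteq> g \<longrightarrow> (\<forall>u\<in>Poly_Mapping.keys g. \<not> tdvd (lt ord g') u))"

text \<open>Cones.  A cone C(h,U) is represented by the pair (h, U), U a set of variables.\<close>
definition cone :: "(('v, 'j) fterm \<Rightarrow>\<^sub>0 'k::comm_ring_1) \<times> 'v set \<Rightarrow> (('v, 'j) fterm \<Rightarrow>\<^sub>0 'k) set" where
  "cone C = {mod_mult p (fst C) | p. \<forall>t\<in>Poly_Mapping.keys p. Poly_Mapping.keys t \<subseteq> snd C}"

definition cone_deg :: "('j \<Rightarrow> nat) \<Rightarrow> (('v, 'j) fterm \<Rightarrow>\<^sub>0 'k::zero) \<times> 'v set \<Rightarrow> nat" where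
  "cone_deg d C = elem_deg d (fst C)"

definition cone_dim :: "(('v, 'j) fterm \<Rightarrow>\<^sub>0 'k::zero) \<times> 'v set \<Rightarrow> nat" where
  "cone_dim C = card (snd C)"

definition cone_decomp :: "('j \<Rightarrow> nat) \<Rightarrow> (('v, 'j) fterm \<Rightarrow>\<^sub>0 'k::comm_ring_1) set
    \<Rightarrow> ((('v, 'j) fterm \<Rightarrow>\<^sub>0 'k) \<times> 'v set) set \<Rightarrow> bool" where
  "cone_decomp d T P \<longleftrightarrow> finite P \<and>
     (\<forall>C\<in>P. homogeneous d (fst C) \<and> fst C \<noteq> 0) \<and>
     (\<forall>f. f \<in> T \<longleftrightarrow> (\<exists>a. (\<forall>C\<in>P. a C \<in> cone C) \<and> f = (\<Sum>C\<in>P. a C))) \<and>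
     (\<forall>a b. (\<forall>C\<in>P. a C \<in> cone C \<and> b C \<in> cone C) \<and> (\<Sum>C\<in>P. a C) = (\<Sum>C\<in>P. b C)
        \<longrightarrow> (\<forall>C\<in>P. a C = b C))"

definition decomp_deg :: "('j \<Rightarrow> nat) \<Rightarrow> ((('v, 'j) fterm \<Rightarrow>\<^sub>0 'k::zero) \<times> 'v set) set \<Rightarrow> nat" where
  "decomp_deg d P = Max (cone_deg d ` P)"

definition q_standard :: "('j \<Rightarrow> nat) \<Rightarrow> nat \<Rightarrow> ((('v, 'j) fterm \<Rightarrow>\<^sub>0 'k::zero) \<times> 'v set) set \<Rightarrow> bool" where
  "q_standard d q P \<longleftrightarrow>
     (\<forall>C\<in>P. cone_dim C > 0 \<longrightarrow> q \<le> cone_deg d C) \<and>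
     (\<forall>C\<in>P. cone_dim C > 0 \<longrightarrow> (\<forall>k. q \<le> k \<and> k \<le> cone_deg d C \<longrightarrow>
        (\<exists>C'\<in>P. cone_deg d C' = k \<and> cone_dim C' \<ge> cone_dim C)))"

end

theory Submission
  imports Defs
begin


lemma mon_deg_UNIV: "mon_deg (a::'v::finite \<Rightarrow>\<^sub>0 nat) = (\<Sum>v\<in>UNIV. Poly_Mapping.lookup a v)"
  unfolding mon_deg_def by (rule sum.mono_neutral_left) (auto simp: in_keys_iff)

lemma mon_deg_add: "mon_deg ((s::'v::finite \<Rightarrow>\<^sub>0 nat) + t) = mon_deg s + mon_deg t"
  by (simp add: mon_deg_UNIV lookup_add sum.distrib)

lemma term_deg_tshift: "term_deg d (tshift (t::'v::finite \<Rightarrow>\<^sub>0 nat) u) = mon_deg t + term_deg d u"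
  by (simp add: term_deg_def tshift_def mon_deg_add)

lemma mon_deg_zero_iff: "mon_deg (t::'v::finite \<Rightarrow>\<^sub>0 nat) = 0 \<longleftrightarrow> t = 0"
proof
  assume "mon_deg t = 0"
  then have "\<forall>v. Poly_Mapping.lookup t v = 0" by (simp add: mon_deg_UNIV)
  then show "t = 0" by (intro poly_mapping_eqI) simp
qed (simp add: mon_deg_def)

lemma tshift_0[simp]: "tshift 0 u = u" by (simp add: tshift_def)
lemma tshift_tshift: "tshift s (tshift t u) = tshift (s + t) u"
  by (simp add: tshift_def add.assoc)
lemma tshift_inj: "tshift t u = tshift t w \<Longrightarrow> u = w"
  by (cases u; cases w) (simp add: tshift_def)
lemma snd_tshift[simp]: "snd (tshift t u) = snd u" by (simp add: tshift_def)
lemma fst_tshift: "fst (tshift t u) = t + fst u" by (simp add: tshift_def)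

lemma tdvd_iff: "tdvd u w \<longleftrightarrow> snd u = snd w \<and> (\<forall>v. Poly_Mapping.lookup (fst u) v \<le> Poly_Mapping.lookup (fst w) v)"
proof
  assume "tdvd u w"
  then obtain t where "w = tshift t u" by (auto simp: tdvd_def)
  then show "snd u = snd w \<and> (\<forall>v. Poly_Mapping.lookup (fst u) v \<le> Poly_Mapping.lookup (fst w) v)"
    by (simp add: tshift_def lookup_add)
next
  assume a: "snd u = snd w \<and> (\<forall>v. Poly_Mapping.lookup (fst u) v \<le> Poly_Mapping.lookup (fst w) v)"
  have "w = tshift (fst w - fst u) u"
    unfolding tshift_def
  proof (rule prod_eqI)
    show "fst w = fst (fst w - fst u + fst u, snd u)"
      using a by (auto intro!: poly_mapping_eqI simp: lookup_add lookup_minus)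
  qed (use a in simp)
  then show "tdvd u w" by (auto simp: tdvd_def)
qed

lemma tdvd_refl[simp]: "tdvd u u" by (simp add: tdvd_iff)
lemma tdvd_trans: "tdvd u v \<Longrightarrow> tdvd v w \<Longrightarrow> tdvd u w"
  by (auto simp: tdvd_iff intro: order_trans)
lemma tdvd_antisym: "tdvd u v \<Longrightarrow> tdvd v u \<Longrightarrow> u = v"
  by (auto simp: tdvd_iff intro!: prod_eqI poly_mapping_eqI intro: antisym)
lemma tdvd_tshift[simp]: "tdvd u (tshift t u)" by (auto simp: tdvd_def)
lemma tdvd_deg: "tdvd u w \<Longrightarrow> term_deg d u \<le> term_deg d (w::('v::finite,'j) fterm)"
  by (auto simp: tdvd_def term_deg_tshift)
lemma tdvd_deg_eq: "tdvd u w \<Longrightarrow> term_deg d u = term_deg d (w::('v::finite,'j) fterm) \<Longrightarrow> u = w"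
  by (auto simp: tdvd_def term_deg_tshift mon_deg_zero_iff)




lemma finite_strict_max:
  assumes irr: "\<forall>u. \<not> ord u u" and tr: "\<forall>u v w. ord u v \<longrightarrow> ord v w \<longrightarrow> ord u w"
    and tot: "\<forall>u v. u \<noteq> v \<longrightarrow> ord u v \<or> ord v u"
    and "finite K" "K \<noteq> {}"
  shows "\<exists>u\<in>K. \<forall>w\<in>K. w \<noteq> u \<longrightarrow> ord w u"
  using assms(4,5)
proof (induction K rule: finite_ne_induct)
  case (singleton x) then show ?case by auto
next
  case (insert x F)
  then obtain m where m: "m \<in> F" "\<forall>w\<in>F. w \<noteq> m \<longrightarrow> ord w m" by auto
  show ?case
  proof (cases "ord m x")
    case True
    then show ?thesis using m tr by (metis insert_iff)
  next
    case False
    then have "x \<noteq> m \<longrightarrow> ord x m" using tot by blast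
    then show ?thesis using m by (metis insert_iff)
  qed
qed

lemma lt_prop:
  assumes mo: "monomial_order ord" and "f \<noteq> 0"
  shows "lt ord f \<in> Poly_Mapping.keys f \<and> (\<forall>w\<in>Poly_Mapping.keys f. w \<noteq> lt ord f \<longrightarrow> ord w (lt ord f))"
proof -
  have irr: "\<forall>u. \<not> ord u u" and tr: "\<forall>u v w. ord u v \<longrightarrow> ord v w \<longrightarrow> ord u w"
    and tot: "\<forall>u v. u \<noteq> v \<longrightarrow> ord u v \<or> ord v u" using mo by (auto simp: monomial_order_def)
  obtain u where u: "u \<in> Poly_Mapping.keys f" "\<forall>w\<in>Poly_Mapping.keys f. w \<noteq> u \<longrightarrow> ord w u"
    using finite_strict_max[OF irr tr tot, of "Poly_Mapping.keys f"] assms(2) by auto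
  have "lt ord f = u"
    unfolding lt_def
  proof (rule the_equality)
    fix u' assume "u' \<in> Poly_Mapping.keys f \<and> (\<forall>w\<in>Poly_Mapping.keys f. w \<noteq> u' \<longrightarrow> ord w u')"
    then show "u' = u" using u irr tr by metis
  qed (use u in auto)
  then show ?thesis using u by simp
qed

lemma mono_props:
  assumes "monomial_order ord"
  shows "\<forall>u. \<not> ord u u" "\<forall>u v w. ord u v \<longrightarrow> ord v w \<longrightarrow> ord u w"
    "\<forall>u v. u \<noteq> v \<longrightarrow> ord u v \<or> ord v u" "wfP ord"
    "\<forall>u v t. ord u v \<longrightarrow> ord (tshift t u) (tshift t v)"
    "\<forall>u t. t \<noteq> 0 \<longrightarrow> ord u (tshift t u)"
  using assms by (auto simp: monomial_order_def)

lemma sum_single_lookup: "(\<Sum>u\<in>Poly_Mapping.keys f. Poly_Mapping.single u (Poly_Mapping.lookup f u)) = f"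
  by (rule poly_mapping_eqI) (simp add: lookup_sum lookup_single when_def in_keys_iff)

lemma lookup_sum_single_inj:
  assumes "inj_on \<phi> A" "finite A" "a \<in> A"
  shows "Poly_Mapping.lookup (\<Sum>u\<in>A. Poly_Mapping.single (\<phi> u) (c u)) (\<phi> a) = c a"
proof -
  have "Poly_Mapping.lookup (\<Sum>u\<in>A. Poly_Mapping.single (\<phi> u) (c u)) (\<phi> a) = (\<Sum>u\<in>A. if u = a then c u else 0)"
    unfolding lookup_sum lookup_single when_def
    by (rule sum.cong) (use assms in \<open>auto dest: inj_onD\<close>)
  also have "\<dots> = c a" using assms by simp
  finally show ?thesis .
qed

lemma lookup_sum_single_notin:
  assumes "w \<notin> \<phi> ` A"
  shows "Poly_Mapping.lookup (\<Sum>u\<in>A. Poly_Mapping.single (\<phi> u) (c u)) w = 0"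
  using assms by (auto simp: lookup_sum lookup_single when_def intro!: sum.neutral)

lemma mod_mult_single:
  fixes g :: "(('v, 'j) fterm \<Rightarrow>\<^sub>0 'k::comm_ring_1)"
  assumes "c \<noteq> 0"
  shows "mod_mult (Poly_Mapping.single t c) g = (\<Sum>u\<in>Poly_Mapping.keys g. Poly_Mapping.single (tshift t u) (c * Poly_Mapping.lookup g u))"
  using assms by (simp add: mod_mult_def)

lemma inj_tshift: "inj_on (tshift t) A" by (auto intro: inj_onI tshift_inj)

lemma lookup_mod_mult_single:
  fixes g :: "(('v, 'j) fterm \<Rightarrow>\<^sub>0 'k::comm_ring_1)"
  shows "Poly_Mapping.lookup (mod_mult (Poly_Mapping.single t c) g) (tshift t u) = c * Poly_Mapping.lookup g u"
proof (cases "c = 0")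
  case True then show ?thesis by (simp add: mod_mult_def)
next
  case False
  show ?thesis
  proof (cases "u \<in> Poly_Mapping.keys g")
    case True
    then show ?thesis unfolding mod_mult_single[OF False]
      using lookup_sum_single_inj[OF inj_tshift[of t "Poly_Mapping.keys g"], where a=u and c="\<lambda>u. c * Poly_Mapping.lookup g u"]
      by simp
  next
    case nk: False
    then have "tshift t u \<notin> tshift t ` Poly_Mapping.keys g" using tshift_inj by blast
    then show ?thesis using nk unfolding mod_mult_single[OF False]
      by (simp add: lookup_sum_single_notin in_keys_iff)
  qed
qed

lemma keys_mod_mult_single:
  fixes g :: "(('v, 'j) fterm \<Rightarrow>\<^sub>0 'k::comm_ring_1)"
  shows "Poly_Mapping.keys (mod_mult (Poly_Mapping.single t c) g) \<subseteq> tshift t ` Poly_Mapping.keys g"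
proof (cases "c = 0")
  case True then show ?thesis by (simp add: mod_mult_def)
next
  case False
  show ?thesis unfolding mod_mult_single[OF False]
    using keys_sum[of "\<lambda>u. Poly_Mapping.single (tshift t u) (c * Poly_Mapping.lookup g u)"]
    by (auto split: if_splits)
qed

lemma mod_mult_neg1:
  fixes g :: "(('v, 'j) fterm \<Rightarrow>\<^sub>0 'k::comm_ring_1)"
  shows "mod_mult (Poly_Mapping.single 0 (-1)) g = - g"
  by (rule poly_mapping_eqI) (metis lookup_mod_mult_single tshift_0 lookup_uminus mult_minus1)

definition mcone :: "('v, 'j) fterm \<Rightarrow> 'v set \<Rightarrow> ('v, 'j) fterm set" where
  "mcone h U = {tshift t h | t. Poly_Mapping.keys t \<subseteq> U}"

lemma mod_mult_single_right:
  "mod_mult p (Poly_Mapping.single h (1::'k::{comm_ring_1})) =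
    (\<Sum>t\<in>Poly_Mapping.keys p. Poly_Mapping.single (tshift t h) (Poly_Mapping.lookup p t))"
  by (cases "(1::'k) = 0") (simp_all add: mod_mult_def)

lemma cone_single:
  fixes h :: "('v, 'j) fterm"
  shows "cone (Poly_Mapping.single h (1::'k::field), U) = {f. Poly_Mapping.keys f \<subseteq> mcone h U}"
proof (intro set_eqI iffI)
  fix f :: "('v, 'j) fterm \<Rightarrow>\<^sub>0 'k"
  assume "f \<in> cone (Poly_Mapping.single h 1, U)"
  then obtain p where p: "\<forall>t\<in>Poly_Mapping.keys p. Poly_Mapping.keys t \<subseteq> U"
    and f: "f = mod_mult p (Poly_Mapping.single h 1)" by (auto simp: cone_def)
  have "Poly_Mapping.keys f \<subseteq> mcone h U"
  proof
    fix w assume "w \<in> Poly_Mapping.keys f"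
    then obtain t where "t \<in> Poly_Mapping.keys p" "w = tshift t h"
      using keys_sum[of "\<lambda>t. Poly_Mapping.single (tshift t h) (Poly_Mapping.lookup p t)" "Poly_Mapping.keys p"]
      unfolding f mod_mult_single_right by (auto split: if_splits)
    then show "w \<in> mcone h U" using p by (auto simp: mcone_def)
  qed
  then show "f \<in> {f. Poly_Mapping.keys f \<subseteq> mcone h U}" by simp
next
  fix f :: "('v, 'j) fterm \<Rightarrow>\<^sub>0 'k"
  assume "f \<in> {f. Poly_Mapping.keys f \<subseteq> mcone h U}"
  then have kf: "Poly_Mapping.keys f \<subseteq> mcone h U" by simp
  define \<phi> where "\<phi> u = fst u - fst h" for u :: "('v, 'j) fterm"
  have \<phi>: "tshift (\<phi> u) h = u" "Poly_Mapping.keys (\<phi> u) \<subseteq> U" if uk: "u \<in> Poly_Mapping.keys f" for u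
  proof -
    obtain t where "u = tshift t h" "Poly_Mapping.keys t \<subseteq> U" using kf uk by (auto simp: mcone_def)
    then show "tshift (\<phi> u) h = u" "Poly_Mapping.keys (\<phi> u) \<subseteq> U" by (auto simp: \<phi>_def tshift_def)
  qed
  have inj: "inj_on \<phi> (Poly_Mapping.keys f)" by (rule inj_onI) (metis \<phi>(1))
  define p where "p = (\<Sum>u\<in>Poly_Mapping.keys f. Poly_Mapping.single (\<phi> u) (Poly_Mapping.lookup f u))"
  have kp: "Poly_Mapping.keys p \<subseteq> \<phi> ` Poly_Mapping.keys f"
    using keys_sum[of "\<lambda>u. Poly_Mapping.single (\<phi> u) (Poly_Mapping.lookup f u)" "Poly_Mapping.keys f"]
    unfolding p_def by (auto split: if_splits)
  have lp: "Poly_Mapping.lookup p (\<phi> u) = Poly_Mapping.lookup f u" if "u \<in> Poly_Mapping.keys f" for u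
    unfolding p_def by (rule lookup_sum_single_inj[OF inj]) (use that in simp_all)
  have "mod_mult p (Poly_Mapping.single h 1) =
      (\<Sum>t\<in>\<phi> ` Poly_Mapping.keys f. Poly_Mapping.single (tshift t h) (Poly_Mapping.lookup p t))"
    unfolding mod_mult_single_right
    by (rule sum.mono_neutral_left) (use kp in \<open>auto simp: in_keys_iff\<close>)
  also have "\<dots> = (\<Sum>u\<in>Poly_Mapping.keys f. Poly_Mapping.single u (Poly_Mapping.lookup f u))"
    by (subst sum.reindex[OF inj]) (auto intro!: sum.cong simp: \<phi> lp)
  also have "\<dots> = f" by (rule sum_single_lookup)
  finally have "f = mod_mult p (Poly_Mapping.single h 1)" by simp
  moreover have "\<forall>t\<in>Poly_Mapping.keys p. Poly_Mapping.keys t \<subseteq> U"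
  proof
    fix t assume "t \<in> Poly_Mapping.keys p"
    then obtain u where "u \<in> Poly_Mapping.keys f" "t = \<phi> u" using kp by blast
    then show "Poly_Mapping.keys t \<subseteq> U" using \<phi>(2) by blast
  qed
  ultimately show "f \<in> cone (Poly_Mapping.single h 1, U)" by (auto simp: cone_def)
qed




lemma mcone_self[simp]: "h \<in> mcone h U"
  unfolding mcone_def by (rule CollectI, rule exI[of _ 0]) simp

lemma mcone_mono: "U \<subseteq> U' \<Longrightarrow> mcone h U \<subseteq> mcone h U'"
  by (auto simp: mcone_def)

lemma mcone_tdvd: "w \<in> mcone h U \<Longrightarrow> tdvd h w"
  by (auto simp: mcone_def)

lemma keys_add_sub: "Poly_Mapping.keys (s + t) \<subseteq> Poly_Mapping.keys s \<union> Poly_Mapping.keys (t::'v \<Rightarrow>\<^sub>0 nat)"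
  by (rule keys_add)

lemma mcone_trans: "u \<in> mcone h U \<Longrightarrow> w \<in> mcone u U' \<Longrightarrow> U' \<subseteq> U \<Longrightarrow> w \<in> mcone h U"
proof -
  assume a: "u \<in> mcone h U" "w \<in> mcone u U'" "U' \<subseteq> U"
  then obtain t s where "u = tshift t h" "Poly_Mapping.keys t \<subseteq> U" "w = tshift s u" "Poly_Mapping.keys s \<subseteq> U'"
    by (auto simp: mcone_def)
  then have "w = tshift (s + t) h" "Poly_Mapping.keys (s + t) \<subseteq> U"
    using keys_add_sub[of s t] a(3) by (auto simp: tshift_tshift)
  then show ?thesis by (auto simp: mcone_def)
qed

lemma mcone_empty[simp]: "mcone h {} = {h}"
  by (auto simp: mcone_def)

lemma mcone_split:
  assumes "x \<in> U"
  shows "mcone h U = mcone h (U - {x}) \<union> mcone (tshift (Poly_Mapping.single x 1) h) U"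
    and "mcone h (U - {x}) \<inter> mcone (tshift (Poly_Mapping.single x 1) h) U = {}"
proof -
  show "mcone h U = mcone h (U - {x}) \<union> mcone (tshift (Poly_Mapping.single x 1) h) U"
  proof (intro equalityI subsetI)
    fix w assume "w \<in> mcone h U"
    then obtain t where t: "w = tshift t h" "Poly_Mapping.keys t \<subseteq> U" by (auto simp: mcone_def)
    show "w \<in> mcone h (U - {x}) \<union> mcone (tshift (Poly_Mapping.single x 1) h) U"
    proof (cases "Poly_Mapping.lookup t x = 0")
      case True
      then have "Poly_Mapping.keys t \<subseteq> U - {x}" using t(2) by (auto simp: in_keys_iff)
      then show ?thesis using t(1) by (auto simp: mcone_def)
    next
      case False
      define t' where "t' = t - Poly_Mapping.single x 1"
      have "t = t' + Poly_Mapping.single x 1"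
        unfolding t'_def using False
        by (intro poly_mapping_eqI) (auto simp: lookup_add lookup_minus lookup_single when_def)
      then have "w = tshift t' (tshift (Poly_Mapping.single x 1) h)" using t(1) by (simp add: tshift_tshift)
      moreover have "Poly_Mapping.keys t' \<subseteq> U"
        using t(2) assms unfolding t'_def
        by (auto simp: in_keys_iff lookup_minus lookup_single when_def split: if_splits)
      ultimately show ?thesis by (auto simp: mcone_def)
    qed
  next
    fix w assume "w \<in> mcone h (U - {x}) \<union> mcone (tshift (Poly_Mapping.single x 1) h) U"
    then show "w \<in> mcone h U"
    proof
      assume "w \<in> mcone h (U - {x})" then show ?thesis using mcone_mono[of "U - {x}" U h] by auto
    next
      assume "w \<in> mcone (tshift (Poly_Mapping.single x 1) h) U"
      moreover have "tshift (Poly_Mapping.single x 1) h \<in> mcone h U" using assms by (auto simp: mcone_def)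
      ultimately show ?thesis using mcone_trans by blast
    qed
  qed
  show "mcone h (U - {x}) \<inter> mcone (tshift (Poly_Mapping.single x 1) h) U = {}"
  proof (rule ccontr)
    assume "\<not> ?thesis"
    then obtain w where "w \<in> mcone h (U - {x})" "w \<in> mcone (tshift (Poly_Mapping.single x 1) h) U" by blast
    then obtain t s where ts: "tshift t h = tshift s (tshift (Poly_Mapping.single x 1) h)"
      "Poly_Mapping.keys t \<subseteq> U - {x}" unfolding mcone_def by auto
    then have "t + fst h = (s + Poly_Mapping.single x 1) + fst h" by (simp add: tshift_tshift tshift_def add.assoc)
    then have "t = s + Poly_Mapping.single x 1" by (rule add_right_imp_eq)
    then have "Poly_Mapping.lookup t x \<noteq> 0" by (simp add: lookup_add)
    then have "x \<in> Poly_Mapping.keys t" by (simp add: in_keys_iff)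
    then show False using ts(2) by blast
  qed
qed

definition indep :: "('v, 'j) fterm set \<Rightarrow> ('v, 'j) fterm \<Rightarrow> 'v set \<Rightarrow> bool" where
  "indep I h W \<longleftrightarrow> mcone h W \<inter> I = {}"

definition mu :: "('v::finite, 'j) fterm set \<Rightarrow> ('v, 'j) fterm \<Rightarrow> 'v set \<Rightarrow> nat" where
  "mu I h U = Max (card ` {W. W \<subseteq> U \<and> indep I h W})"

lemma mu_ge: "W \<subseteq> U \<Longrightarrow> indep I h W \<Longrightarrow> card W \<le> mu I h (U::'v::finite set)"
  unfolding mu_def by (rule Max_ge) auto

lemma mu_attained:
  assumes "h \<notin> I"
  shows "\<exists>W. W \<subseteq> (U::'v::finite set) \<and> indep I h W \<and> card W = mu I h U"
proof -
  have "{} \<in> {W. W \<subseteq> U \<and> indep I h W}" using assms by (auto simp: indep_def)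
  then have "mu I h U \<in> card ` {W. W \<subseteq> U \<and> indep I h W}"
    unfolding mu_def by (intro Max_in) auto
  then show ?thesis by auto
qed

lemma mu_le_card: assumes "h \<notin> I" shows "mu I h (U::'v::finite set) \<le> card U"
proof -
  obtain W where "W \<subseteq> U" "card W = mu I h U" using mu_attained[OF assms] by blast
  then show ?thesis by (metis card_mono finite)
qed




locale mideal =
  fixes L :: "('v::finite, 'j) fterm set" and I :: "('v, 'j) fterm set" and d :: "'j \<Rightarrow> nat" and q :: nat
  assumes finL: "finite L" and IL: "I = {w. \<exists>u\<in>L. tdvd u w}"
begin

abbreviation "dg \<equiv> term_deg d"

lemma I_up: "u \<in> I \<Longrightarrow> tdvd u w \<Longrightarrow> w \<in> I"
  using IL tdvd_trans by blast

definition rel :: "('v, 'j) fterm \<Rightarrow> 'v set \<Rightarrow> ('v, 'j) fterm set" where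
  "rel h U = {g\<in>L. snd g = snd h \<and> (\<forall>v. v \<notin> U \<longrightarrow> Poly_Mapping.lookup (fst g) v \<le> Poly_Mapping.lookup (fst h) v)}"

definition meas :: "('v, 'j) fterm \<Rightarrow> 'v set \<Rightarrow> nat" where
  "meas h U = (\<Sum>g\<in>rel h U. \<Sum>v\<in>U. Poly_Mapping.lookup (fst g) v - Poly_Mapping.lookup (fst h) v)"

lemma mon_deg_single1: "mon_deg (Poly_Mapping.single (x::'v) (1::nat)) = 1"
  by (simp add: mon_deg_def)

lemma meas_decr:
  assumes "x \<in> U" and "dg h < q \<or> (\<exists>g\<in>rel h U. Poly_Mapping.lookup (fst h) x < Poly_Mapping.lookup (fst g) x)"
  shows "meas (tshift (Poly_Mapping.single x 1) h) U + (q - dg (tshift (Poly_Mapping.single x 1) h))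
       < meas h U + (q - dg h)"
proof -
  let ?h' = "tshift (Poly_Mapping.single x 1) h"
  have lk: "Poly_Mapping.lookup (fst ?h') v = Poly_Mapping.lookup (fst h) v + (if v = x then 1 else 0)" for v
    by (simp add: fst_tshift lookup_add lookup_single when_def)
  have rel_eq: "rel ?h' U = rel h U"
    unfolding rel_def using assms(1) by (auto simp: fst_tshift lookup_add lookup_single when_def)
  have dg': "dg ?h' = dg h + 1" using mon_deg_single1[of x] by (simp add: term_deg_tshift)
  have le: "(\<Sum>v\<in>U. Poly_Mapping.lookup (fst g) v - Poly_Mapping.lookup (fst ?h') v)
      \<le> (\<Sum>v\<in>U. Poly_Mapping.lookup (fst g) v - Poly_Mapping.lookup (fst h) v)" for g
    by (rule sum_mono) (simp add: fst_tshift lookup_add lookup_single when_def)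
  have mle: "meas ?h' U \<le> meas h U"
    unfolding meas_def rel_eq by (rule sum_mono) (rule le)
  show ?thesis
  proof (cases "dg h < q")
    case True
    then show ?thesis using mle dg' by linarith
  next
    case False
    then obtain g where g: "g \<in> rel h U" "Poly_Mapping.lookup (fst h) x < Poly_Mapping.lookup (fst g) x"
      using assms(2) by blast
    have "(\<Sum>v\<in>U. Poly_Mapping.lookup (fst g) v - Poly_Mapping.lookup (fst ?h') v)
      < (\<Sum>v\<in>U. Poly_Mapping.lookup (fst g) v - Poly_Mapping.lookup (fst h) v)"
      by (rule sum_strict_mono_ex1) (use g assms(1) in \<open>auto simp: fst_tshift lookup_add lookup_single when_def\<close>)
    moreover have "finite (rel h U)" using finL by (simp add: rel_def)
    ultimately have "meas ?h' U < meas h U"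
      unfolding meas_def rel_eq
      by (intro sum_strict_mono_ex1) (use g le in blast)+
    then show ?thesis using dg' False by linarith
  qed
qed

lemma indep_insert:
  assumes "indep I h W" "x \<in> U" "W \<subseteq> U"
    and nrel: "\<forall>g\<in>rel h U. Poly_Mapping.lookup (fst g) x \<le> Poly_Mapping.lookup (fst h) x"
  shows "indep I h (insert x W)"
  unfolding indep_def
proof (rule ccontr)
  assume "mcone h (insert x W) \<inter> I \<noteq> {}"
  then obtain w where w: "w \<in> mcone h (insert x W)" "w \<in> I" by blast
  then obtain t where t: "w = tshift t h" "Poly_Mapping.keys t \<subseteq> insert x W" by (auto simp: mcone_def)
  obtain g where g: "g \<in> L" "tdvd g w" using w(2) IL by blast
  have gl: "snd g = snd h" "\<And>v. Poly_Mapping.lookup (fst g) v \<le> Poly_Mapping.lookup t v + Poly_Mapping.lookup (fst h) v"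
    using g(2) t(1) by (auto simp: tdvd_iff fst_tshift lookup_add)
  have "v \<notin> U \<Longrightarrow> Poly_Mapping.lookup t v = 0" for v using t(2) assms(2,3) by (auto simp: in_keys_iff)
  then have "\<forall>v. v \<notin> U \<longrightarrow> Poly_Mapping.lookup (fst g) v \<le> Poly_Mapping.lookup (fst h) v"
    using gl(2) by (metis add_0)
  then have "g \<in> rel h U" using g(1) gl(1) unfolding rel_def by blast
  then have gx: "Poly_Mapping.lookup (fst g) x \<le> Poly_Mapping.lookup (fst h) x" using nrel by blast
  define t' where "t' = t - Poly_Mapping.single x (Poly_Mapping.lookup t x)"
  have lt': "Poly_Mapping.lookup t' v = (if v = x then 0 else Poly_Mapping.lookup t v)" for v
    by (simp add: t'_def lookup_minus lookup_single when_def)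
  have "Poly_Mapping.keys t' \<subseteq> W"
  proof
    fix v assume "v \<in> Poly_Mapping.keys t'"
    then have "v \<noteq> x" "v \<in> Poly_Mapping.keys t" by (auto simp: in_keys_iff lt' split: if_splits)
    then show "v \<in> W" using t(2) by blast
  qed
  then have "tshift t' h \<in> mcone h W" by (auto simp: mcone_def)
  moreover have "tdvd g (tshift t' h)"
    unfolding tdvd_iff using gl gx by (auto simp: fst_tshift lookup_add lt')
  then have "tshift t' h \<in> I" using g(1) IL by blast
  ultimately show False using assms(1) by (auto simp: indep_def)
qed

definition SPLIT :: "('v, 'j) fterm \<Rightarrow> 'v set \<Rightarrow> (('v, 'j) fterm \<times> 'v set) set \<Rightarrow> bool" where
  "SPLIT h U Q \<longleftrightarrow> finite Q \<and>
     (\<forall>C\<in>Q. snd C \<subseteq> U \<and> fst C \<in> mcone h U) \<and>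
     (\<forall>C\<in>Q. \<forall>C'\<in>Q. C \<noteq> C' \<longrightarrow> mcone (fst C) (snd C) \<inter> mcone (fst C') (snd C') = {}) \<and>
     (\<Union>C\<in>Q. mcone (fst C) (snd C)) = mcone h U - I \<and>
     (\<forall>C\<in>Q. card (snd C) > 0 \<longrightarrow> max q (dg h) \<le> dg (fst C) \<and>
        (\<forall>k. max q (dg h) \<le> k \<and> k \<le> dg (fst C) \<longrightarrow> (\<exists>C'\<in>Q. dg (fst C') = k \<and> card (snd C) \<le> card (snd C')))) \<and>
     (h \<notin> I \<longrightarrow> q \<le> dg h \<longrightarrow> (\<exists>C\<in>Q. dg (fst C) = dg h \<and> mu I h U \<le> card (snd C))) \<and>
     (\<forall>w\<in>mcone h U \<inter> I. w \<noteq> h \<longrightarrow> (\<forall>v. tdvd v w \<and> v \<noteq> w \<longrightarrow> v \<notin> I) \<longrightarrow> (\<exists>C\<in>Q. dg w \<le> dg (fst C) + 1))"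

lemma SP:
  assumes "SPLIT h U Q"
  shows SP_fin: "finite Q"
    and SP_sub: "\<And>C. C \<in> Q \<Longrightarrow> snd C \<subseteq> U \<and> fst C \<in> mcone h U"
    and SP_disj: "\<And>C C'. C \<in> Q \<Longrightarrow> C' \<in> Q \<Longrightarrow> C \<noteq> C' \<Longrightarrow> mcone (fst C) (snd C) \<inter> mcone (fst C') (snd C') = {}"
    and SP_un: "(\<Union>C\<in>Q. mcone (fst C) (snd C)) = mcone h U - I"
    and SP_std: "\<And>C. C \<in> Q \<Longrightarrow> card (snd C) > 0 \<Longrightarrow> max q (dg h) \<le> dg (fst C) \<and>
        (\<forall>k. max q (dg h) \<le> k \<and> k \<le> dg (fst C) \<longrightarrow> (\<exists>C'\<in>Q. dg (fst C') = k \<and> card (snd C) \<le> card (snd C')))"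
    and SP_D: "h \<notin> I \<Longrightarrow> q \<le> dg h \<Longrightarrow> (\<exists>C\<in>Q. dg (fst C) = dg h \<and> mu I h U \<le> card (snd C))"
    and SP_E: "\<And>w. w \<in> mcone h U \<Longrightarrow> w \<in> I \<Longrightarrow> w \<noteq> h \<Longrightarrow> (\<forall>v. tdvd v w \<and> v \<noteq> w \<longrightarrow> v \<notin> I) \<Longrightarrow> (\<exists>C\<in>Q. dg w \<le> dg (fst C) + 1)"
  using assms unfolding SPLIT_def apply -
  apply (elim conjE, assumption)
  apply (elim conjE, blast)
  apply (elim conjE, blast)
  apply (elim conjE, assumption)
  apply (elim conjE, blast)
  apply (elim conjE, blast)
  apply (elim conjE, blast)
  done

lemma card_le_mu:
  assumes "snd C \<subseteq> U" "fst C \<in> mcone h U" "mcone (fst C) (snd C) \<inter> I = {}"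
  shows "card (snd C) \<le> mu I h U"
proof -
  note C = assms
  obtain s where s: "fst C = tshift s h" using C(2) by (auto simp: mcone_def)
  have "indep I h (snd C)"
    unfolding indep_def
  proof (rule ccontr)
    assume "mcone h (snd C) \<inter> I \<noteq> {}"
    then obtain t where t: "tshift t h \<in> I" "Poly_Mapping.keys t \<subseteq> snd C" by (auto simp: mcone_def)
    have "tdvd (tshift t h) (tshift t (fst C))"
      by (auto simp: s tshift_tshift tdvd_def add.commute intro: exI[of _ s])
    then have "tshift t (fst C) \<in> I" using I_up t(1) by blast
    moreover have "tshift t (fst C) \<in> mcone (fst C) (snd C)" using t(2) by (auto simp: mcone_def)
    ultimately show False using C(3) by blast
  qed
  then show ?thesis using mu_ge C(1) by blast
qed

lemma SP_coneI:
  assumes "SPLIT h U Q" "C \<in> Q"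
  shows "mcone (fst C) (snd C) \<subseteq> mcone h U - I"
  using SP_un[OF assms(1)] assms(2) by blast

lemma split_combine:
  assumes x: "x \<in> U" and hI: "h \<notin> I" and S0: "SPLIT h (U - {x}) Q0"
    and S1: "SPLIT (tshift (Poly_Mapping.single x 1) h) U Q1"
    and mux: "q \<le> dg h \<Longrightarrow> mu I h U \<le> mu I h (U - {x})"
  shows "SPLIT h U (Q0 \<union> Q1)"
proof -
  let ?xh = "tshift (Poly_Mapping.single x 1) h"
  have dgx: "dg ?xh = dg h + 1" using mon_deg_single1[of x] by (simp add: term_deg_tshift)
  note ms = mcone_split[OF x, of h]
  have c0: "mcone (fst C) (snd C) \<subseteq> mcone h (U - {x}) - I" if "C \<in> Q0" for C
    using SP_coneI[OF S0 that] .
  have c1: "mcone (fst C) (snd C) \<subseteq> mcone ?xh U - I" if "C \<in> Q1" for C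
    using SP_coneI[OF S1 that] .
  have p1: "finite (Q0 \<union> Q1)" using SP_fin[OF S0] SP_fin[OF S1] by simp
  have p2: "\<forall>C\<in>Q0 \<union> Q1. snd C \<subseteq> U \<and> fst C \<in> mcone h U"
    using SP_sub[OF S0] SP_sub[OF S1] ms(1) by blast
  have p3: "\<forall>C\<in>Q0 \<union> Q1. \<forall>C'\<in>Q0 \<union> Q1. C \<noteq> C' \<longrightarrow> mcone (fst C) (snd C) \<inter> mcone (fst C') (snd C') = {}"
  proof (intro ballI impI)
    fix C C' assume a: "C \<in> Q0 \<union> Q1" "C' \<in> Q0 \<union> Q1" "C \<noteq> C'"
    show "mcone (fst C) (snd C) \<inter> mcone (fst C') (snd C') = {}"
    proof (cases "C \<in> Q0")
      case True
      show ?thesis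
      proof (cases "C' \<in> Q0")
        case True then show ?thesis using SP_disj[OF S0] \<open>C \<in> Q0\<close> a(3) by blast
      next
        case False then have "C' \<in> Q1" using a by blast
        then show ?thesis using c0[OF \<open>C \<in> Q0\<close>] c1 ms(2) by blast
      qed
    next
      case False then have C1: "C \<in> Q1" using a by blast
      show ?thesis
      proof (cases "C' \<in> Q1")
        case True then show ?thesis using SP_disj[OF S1] C1 a(3) by blast
      next
        case False then have "C' \<in> Q0" using a by blast
        then show ?thesis using c0 c1[OF C1] ms(2) by blast
      qed
    qed
  qed
  have p4: "(\<Union>C\<in>Q0 \<union> Q1. mcone (fst C) (snd C)) = mcone h U - I"
    using SP_un[OF S0] SP_un[OF S1] ms(1) by blast
  have p5: "max q (dg h) \<le> dg (fst C) \<and>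
        (\<forall>k. max q (dg h) \<le> k \<and> k \<le> dg (fst C) \<longrightarrow> (\<exists>C'\<in>Q0 \<union> Q1. dg (fst C') = k \<and> card (snd C) \<le> card (snd C')))"
    if C: "C \<in> Q0 \<union> Q1" "card (snd C) > 0" for C
  proof (cases "C \<in> Q0")
    case True
    then show ?thesis using SP_std[OF S0 True C(2)] by blast
  next
    case False
    then have C1: "C \<in> Q1" using C by blast
    note st = SP_std[OF S1 C1 C(2)]
    have cmu: "card (snd C) \<le> mu I h U"
    proof (rule card_le_mu)
      show "snd C \<subseteq> U" using SP_sub[OF S1 C1] by blast
      show "fst C \<in> mcone h U" using SP_sub[OF S1 C1] ms(1) by blast
      show "mcone (fst C) (snd C) \<inter> I = {}" using c1[OF C1] by blast
    qed
    show ?thesis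
    proof (intro conjI allI impI)
      show "max q (dg h) \<le> dg (fst C)" using st dgx by simp
    next
      fix k assume k: "max q (dg h) \<le> k \<and> k \<le> dg (fst C)"
      show "\<exists>C'\<in>Q0 \<union> Q1. dg (fst C') = k \<and> card (snd C) \<le> card (snd C')"
      proof (cases "max q (dg ?xh) \<le> k")
        case True then show ?thesis using st k by blast
      next
        case False
        then have "k = dg h" "q \<le> dg h" using k dgx by auto
        then obtain C' where "C' \<in> Q0" "dg (fst C') = dg h" "mu I h (U - {x}) \<le> card (snd C')"
          using SP_D[OF S0 hI] by blast
        then show ?thesis using cmu mux \<open>q \<le> dg h\<close> \<open>k = dg h\<close> by force
      qed
    qed
  qed
  have p6: "h \<notin> I \<longrightarrow> q \<le> dg h \<longrightarrow> (\<exists>C\<in>Q0 \<union> Q1. dg (fst C) = dg h \<and> mu I h U \<le> card (snd C))"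
    using SP_D[OF S0] mux by force
  have p7: "\<exists>C\<in>Q0 \<union> Q1. dg w \<le> dg (fst C) + 1"
    if w: "w \<in> mcone h U \<inter> I" "w \<noteq> h" "\<forall>v. tdvd v w \<and> v \<noteq> w \<longrightarrow> v \<notin> I" for w
  proof (cases "w \<in> mcone h (U - {x})")
    case True then show ?thesis using SP_E[OF S0 True] w by blast
  next
    case False
    then have wx: "w \<in> mcone ?xh U" using w(1) ms(1) by blast
    show ?thesis
    proof (cases "w = ?xh")
      case False then show ?thesis using SP_E[OF S1 wx] w by blast
    next
      case True
      have "h \<in> mcone h (U - {x}) - I" using hI by simp
      then obtain C where C: "C \<in> Q0" "h \<in> mcone (fst C) (snd C)" using SP_un[OF S0] by blast
      have "fst C \<in> mcone h (U - {x})" using SP_sub[OF S0 C(1)] by blast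
      then have "dg h \<le> dg (fst C)" by (intro tdvd_deg mcone_tdvd)
      then show ?thesis using C(1) True dgx by force
    qed
  qed
  show ?thesis unfolding SPLIT_def
    apply (intro conjI)
    subgoal by (rule p1)
    subgoal by (rule p2)
    subgoal by (rule p3)
    subgoal by (rule p4)
    subgoal using p5 by blast
    subgoal by (rule p6)
    subgoal using p7 by blast
    done
qed

end



context mideal begin

lemma split_base_I:
  assumes "h \<in> I" shows "SPLIT h U {}"
proof -
  have "mcone h U - I = {}" using assms I_up mcone_tdvd by blast
  moreover have "\<not> (w \<in> mcone h U \<inter> I \<and> w \<noteq> h \<and> (\<forall>v. tdvd v w \<and> v \<noteq> w \<longrightarrow> v \<notin> I))" for w
    using assms mcone_tdvd by blast
  ultimately show ?thesis unfolding SPLIT_def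
    apply (intro conjI)
    subgoal by simp
    subgoal by simp
    subgoal by simp
    subgoal by simp
    subgoal by simp
    subgoal using assms by blast
    subgoal by blast
    done
qed

lemma split_base_indep:
  assumes hI: "h \<notin> I" and ind: "indep I h U" and qU: "q \<le> dg h \<or> U = {}"
  shows "SPLIT h U {(h, U)}"
proof -
  have u: "(\<Union>C\<in>{(h, U)}. mcone (fst C) (snd C)) = mcone h U - I" using ind by (auto simp: indep_def)
  have s: "card (snd C) > 0 \<longrightarrow> max q (dg h) \<le> dg (fst C) \<and>
        (\<forall>k. max q (dg h) \<le> k \<and> k \<le> dg (fst C) \<longrightarrow> (\<exists>C'\<in>{(h, U)}. dg (fst C') = k \<and> card (snd C) \<le> card (snd C')))"
    if "C \<in> {(h, U)}" for C
    using that qU by auto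
  have dd: "\<exists>C\<in>{(h, U)}. dg (fst C) = dg h \<and> mu I h U \<le> card (snd C)"
    using mu_le_card[OF hI] by simp
  have e: "\<forall>w\<in>mcone h U \<inter> I. P w" for P using ind by (auto simp: indep_def)
  show ?thesis unfolding SPLIT_def
    apply (intro conjI)
    subgoal by simp
    subgoal by simp
    subgoal by simp
    subgoal by (rule u)
    subgoal using s by blast
    subgoal using dd by blast
    subgoal by (rule e)
    done
qed

lemma split_step:
  assumes IHl: "\<And>x. x \<in> U \<Longrightarrow> \<exists>Q. SPLIT h (U - {x}) Q"
    and IHr: "\<And>x. x \<in> U \<Longrightarrow> meas (tshift (Poly_Mapping.single x 1) h) U + (q - dg (tshift (Poly_Mapping.single x 1) h))
       < meas h U + (q - dg h) \<Longrightarrow> \<exists>Q. SPLIT (tshift (Poly_Mapping.single x 1) h) U Q"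
  shows "\<exists>Q. SPLIT h U Q"
proof (cases "h \<in> I")
  case True then show ?thesis using split_base_I by blast
next
  case hI: False
  show ?thesis
  proof (cases "indep I h U \<and> (q \<le> dg h \<or> U = {})")
    case True then show ?thesis using split_base_indep hI by blast
  next
    case nb: False
    have Une: "U \<noteq> {}"
    proof
      assume "U = {}"
      then have "indep I h U" using hI by (simp add: indep_def)
      then show False using nb \<open>U = {}\<close> by blast
    qed
    obtain x where x: "x \<in> U"
      and dec: "meas (tshift (Poly_Mapping.single x 1) h) U + (q - dg (tshift (Poly_Mapping.single x 1) h))
       < meas h U + (q - dg h)"
      and mux: "q \<le> dg h \<Longrightarrow> mu I h U \<le> mu I h (U - {x})"
    proof (cases "q \<le> dg h")
      case True
      then have ni: "\<not> indep I h U" using nb by blast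
      obtain W where W: "W \<subseteq> U" "indep I h W" "card W = mu I h U" using mu_attained[OF hI] by blast
      then have "W \<noteq> U" using ni by blast
      then obtain x where x: "x \<in> U" "x \<notin> W" using W(1) by blast
      have "\<exists>g\<in>rel h U. Poly_Mapping.lookup (fst h) x < Poly_Mapping.lookup (fst g) x"
      proof (rule ccontr)
        assume "\<not> ?thesis"
        then have "\<forall>g\<in>rel h U. Poly_Mapping.lookup (fst g) x \<le> Poly_Mapping.lookup (fst h) x" by auto
        then have "indep I h (insert x W)" using indep_insert W x by blast
        then have "card (insert x W) \<le> mu I h U" using mu_ge W(1) x(1) by blast
        moreover have "card (insert x W) = card W + 1" using x(2) by (simp add: finite_subset)
        ultimately show False using W(3) by simp
      qed
      note ex = this
      have "meas (tshift (Poly_Mapping.single x 1) h) U + (q - dg (tshift (Poly_Mapping.single x 1) h))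
       < meas h U + (q - dg h)" by (rule meas_decr[OF x(1) disjI2[OF ex]])
      moreover have "mu I h U \<le> mu I h (U - {x})" using mu_ge[of W "U - {x}" I h] W x by auto
      ultimately show ?thesis by (intro that[OF x(1)])
    next
      case False
      obtain x where x: "x \<in> U" using Une by blast
      have "dg h < q" using False by simp
      show ?thesis by (rule that[OF x]) (use meas_decr[OF x disjI1[OF \<open>dg h < q\<close>]] False in simp_all)
    qed
    obtain Q0 where Q0: "SPLIT h (U - {x}) Q0" using IHl x by blast
    obtain Q1 where Q1: "SPLIT (tshift (Poly_Mapping.single x 1) h) U Q1" using IHr x dec by blast
    show ?thesis using split_combine[OF x hI Q0 Q1 mux] by blast
  qed
qed

lemma split_exists: "\<exists>Q. SPLIT h U Q"
proof (induction "card U" arbitrary: U h rule: less_induct)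
  case less
  have inner: "\<forall>h. meas h U + (q - dg h) = n \<longrightarrow> (\<exists>Q. SPLIT h U Q)" for n
  proof (induction n rule: less_induct)
    case (less n)
    show ?case
    proof (intro allI impI)
      fix h assume hn: "meas h U + (q - dg h) = n"
      show "\<exists>Q. SPLIT h U Q"
      proof (rule split_step)
        fix x assume "x \<in> U"
        then have "card (U - {x}) < card U" by (intro card_Diff1_less) simp_all
        then show "\<exists>Q. SPLIT h (U - {x}) Q" using less.hyps(1) by blast
      next
        fix x assume "x \<in> U" and "meas (tshift (Poly_Mapping.single x 1) h) U + (q - dg (tshift (Poly_Mapping.single x 1) h))
           < meas h U + (q - dg h)"
        then show "\<exists>Q. SPLIT (tshift (Poly_Mapping.single x 1) h) U Q" using less.IH hn by blast
      qed
    qed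
  qed
  then show ?case by blast
qed

end



lemma sub_closed:
  fixes M :: "(('v, 'j) fterm \<Rightarrow>\<^sub>0 'k::comm_ring_1) set"
  assumes "is_submodule M" "f \<in> M" "g \<in> M"
  shows "f - g \<in> M"
proof -
  have "mod_mult (Poly_Mapping.single 0 (-1)) g \<in> M" using assms by (simp add: is_submodule_def)
  then have "-g \<in> M" by (simp add: mod_mult_neg1)
  then have "f + - g \<in> M" using assms unfolding is_submodule_def by blast
  then show ?thesis by simp
qed

lemma lookup_hcomp:
  "Poly_Mapping.lookup (hcomp d k f) u = (if term_deg d u = k then Poly_Mapping.lookup f u else 0)"
  unfolding hcomp_def lookup_sum lookup_single when_def
  by (auto simp: in_keys_iff)

lemma elem_deg_homog:
  assumes "f \<noteq> 0" "\<forall>u\<in>Poly_Mapping.keys f. term_deg d u = k"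
  shows "elem_deg d f = k"
proof -
  have "Poly_Mapping.keys f \<noteq> {}" using assms(1) by simp
  then obtain u where "u \<in> Poly_Mapping.keys f" by blast
  then have "term_deg d ` Poly_Mapping.keys f = {k}" using assms(2) by force
  then show ?thesis by (simp add: elem_deg_def)
qed

lemma reduce_all:
  fixes M :: "(('v::finite, 'j) fterm \<Rightarrow>\<^sub>0 'k::field) set"
  assumes mo: "monomial_order ord" and sm: "is_submodule M"
    and all: "\<forall>w. w \<in> init_terms ord M"
  shows "f \<in> M"
proof -
  have "\<forall>f. f \<noteq> 0 \<longrightarrow> lt ord f = u \<longrightarrow> f \<in> M" for u
  proof (induction u rule: wfp_induct_rule[OF mono_props(4)[OF mo]])
    case (1 u)
    show ?case
    proof (intro allI impI)
      fix f :: "('v, 'j) fterm \<Rightarrow>\<^sub>0 'k" assume f0: "f \<noteq> 0" and fu: "lt ord f = u"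
      note lf = lt_prop[OF mo f0]
      obtain g where g: "g \<in> M" "g \<noteq> 0" "tdvd (lt ord g) u" using all[rule_format, of u] by (auto simp: init_terms_def)
      note lg = lt_prop[OF mo g(2)]
      obtain t where t: "u = tshift t (lt ord g)" using g(3) by (auto simp: tdvd_def)
      define c where "c = lc ord f / lc ord g"
      have lcg: "lc ord g \<noteq> 0" using lg by (simp add: lc_def in_keys_iff)
      define m where "m = mod_mult (Poly_Mapping.single t c) g"
      have mM: "m \<in> M" using sm g(1) by (simp add: is_submodule_def m_def)
      define r where "r = f - m"
      have lru: "Poly_Mapping.lookup r u = 0"
      proof -
        have ltf: "lt ord f = tshift t (lt ord g)" using fu t by simp
        show ?thesis using lcg unfolding r_def m_def t
          by (simp add: lookup_minus lookup_mod_mult_single c_def lc_def ltf)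
      qed
      have kr: "ord w u" if w: "w \<in> Poly_Mapping.keys r" for w
      proof -
        have wu: "w \<noteq> u" using w lru by (auto simp: in_keys_iff)
        have "w \<in> Poly_Mapping.keys f \<union> Poly_Mapping.keys m"
          using w keys_add[of f "-m"] unfolding r_def by auto
        then show ?thesis
        proof
          assume "w \<in> Poly_Mapping.keys f" then show ?thesis using lf wu fu by blast
        next
          assume "w \<in> Poly_Mapping.keys m"
          then obtain w' where w': "w' \<in> Poly_Mapping.keys g" "w = tshift t w'"
            using keys_mod_mult_single unfolding m_def by blast
          then have "w' \<noteq> lt ord g" using wu t by blast
          then have "ord w' (lt ord g)" using lg w' by blast
          then show ?thesis using mono_props(5)[OF mo] w' t by blast
        qed
      qed
      have "r \<in> M"
      proof (cases "r = 0")
        case True then show ?thesis using sm by (simp add: is_submodule_def)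
      next
        case False
        then have "ord (lt ord r) u" using kr lt_prop[OF mo False] by blast
        then show ?thesis using 1 False by blast
      qed
      then have "r + m \<in> M" using mM sm by (simp add: is_submodule_def)
      then show "f \<in> M" by (simp add: r_def)
    qed
  qed
  then show ?thesis using sm by (cases "f = 0") (auto simp: is_submodule_def)
qed




lemma decomp_generic:
  fixes P :: "'c set" and T :: "'c \<Rightarrow> 'a set" and cn :: "'c \<Rightarrow> ('a \<Rightarrow>\<^sub>0 'k::comm_ring_1) set"
  assumes fin: "finite P" and cP: "\<And>C. C \<in> P \<Longrightarrow> cn C = {f. Poly_Mapping.keys f \<subseteq> T C}"
    and disj: "\<And>C C'. C \<in> P \<Longrightarrow> C' \<in> P \<Longrightarrow> C \<noteq> C' \<Longrightarrow> T C \<inter> T C' = {}"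
    and un: "(\<Union>C\<in>P. T C) = X"
  shows "\<forall>f. Poly_Mapping.keys f \<subseteq> X \<longleftrightarrow> (\<exists>a. (\<forall>C\<in>P. a C \<in> cn C) \<and> f = (\<Sum>C\<in>P. a C))"
    and "\<forall>a b. (\<forall>C\<in>P. a C \<in> cn C \<and> b C \<in> cn C) \<and> (\<Sum>C\<in>P. a C) = (\<Sum>C\<in>P. b C) \<longrightarrow> (\<forall>C\<in>P. a C = b C)"
proof -
  show "\<forall>f. Poly_Mapping.keys f \<subseteq> X \<longleftrightarrow> (\<exists>a. (\<forall>C\<in>P. a C \<in> cn C) \<and> f = (\<Sum>C\<in>P. a C))"
  proof (intro allI iffI)
    fix f :: "'a \<Rightarrow>\<^sub>0 'k" assume kf: "Poly_Mapping.keys f \<subseteq> X"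
    define a where "a C = (\<Sum>u\<in>Poly_Mapping.keys f \<inter> T C. Poly_Mapping.single u (Poly_Mapping.lookup f u))" for C
    have "a C \<in> cn C" if "C \<in> P" for C
    proof -
      have "Poly_Mapping.keys (a C) \<subseteq> T C"
        using keys_sum[of "\<lambda>u. Poly_Mapping.single u (Poly_Mapping.lookup f u)" "Poly_Mapping.keys f \<inter> T C"]
        unfolding a_def by (auto split: if_splits)
      then show ?thesis using cP[OF that] by simp
    qed
    note aC = this
    have sf: "(\<Sum>C\<in>P. a C) = f"
    proof -
      have "(\<Sum>C\<in>P. a C) = (\<Sum>u\<in>(\<Union>C\<in>P. Poly_Mapping.keys f \<inter> T C). Poly_Mapping.single u (Poly_Mapping.lookup f u))"
        unfolding a_def by (rule sum.UNION_disjoint[symmetric]) (use fin disj in auto)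
      also have "(\<Union>C\<in>P. Poly_Mapping.keys f \<inter> T C) = Poly_Mapping.keys f" using kf un by auto
      finally show ?thesis by (simp add: sum_single_lookup)
    qed
    show "\<exists>a. (\<forall>C\<in>P. a C \<in> cn C) \<and> f = (\<Sum>C\<in>P. a C)"
      by (rule exI[of _ a]) (use aC sf in simp)
  next
    fix f :: "'a \<Rightarrow>\<^sub>0 'k" assume "\<exists>a. (\<forall>C\<in>P. a C \<in> cn C) \<and> f = (\<Sum>C\<in>P. a C)"
    then obtain a where a: "\<forall>C\<in>P. a C \<in> cn C" "f = (\<Sum>C\<in>P. a C)" by blast
    have "Poly_Mapping.keys f \<subseteq> (\<Union>C\<in>P. Poly_Mapping.keys (a C))" unfolding a(2) by (rule keys_sum)
    also have "\<dots> \<subseteq> (\<Union>C\<in>P. T C)"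
    proof (rule UN_mono)
      fix C assume "C \<in> P" then show "Poly_Mapping.keys (a C) \<subseteq> T C" using a(1) cP by blast
    qed simp
    finally show "Poly_Mapping.keys f \<subseteq> X" using un by simp
  qed
next
  have lk: "Poly_Mapping.lookup (\<Sum>C\<in>P. a C) u = Poly_Mapping.lookup (a C0) u"
    if a: "\<forall>C\<in>P. a C \<in> cn C" and C0: "C0 \<in> P" "u \<in> T C0" for a C0 u
  proof -
    have z: "Poly_Mapping.lookup (a C) u = 0" if "C \<in> P - {C0}" for C
    proof -
      have "u \<notin> T C" using disj[of C C0] that C0 by blast
      then have "u \<notin> Poly_Mapping.keys (a C)" using a cP that by blast
      then show ?thesis by (simp add: in_keys_iff)
    qed
    have "Poly_Mapping.lookup (\<Sum>C\<in>P. a C) u = (\<Sum>C\<in>P. Poly_Mapping.lookup (a C) u)" by (rule lookup_sum)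
    also have "\<dots> = Poly_Mapping.lookup (a C0) u + (\<Sum>C\<in>P - {C0}. Poly_Mapping.lookup (a C) u)"
      using fin C0(1) by (rule sum.remove)
    also have "\<dots> = Poly_Mapping.lookup (a C0) u" using z by simp
    finally show ?thesis .
  qed
  show "\<forall>a b. (\<forall>C\<in>P. a C \<in> cn C \<and> b C \<in> cn C) \<and> (\<Sum>C\<in>P. a C) = (\<Sum>C\<in>P. b C) \<longrightarrow> (\<forall>C\<in>P. a C = b C)"
  proof (intro allI impI ballI)
    fix a b C0 assume ab: "(\<forall>C\<in>P. a C \<in> cn C \<and> b C \<in> cn C) \<and> (\<Sum>C\<in>P. a C) = (\<Sum>C\<in>P. b C)" and C0: "C0 \<in> P"
    show "a C0 = b C0"
    proof (rule poly_mapping_eqI)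
      fix u
      show "Poly_Mapping.lookup (a C0) u = Poly_Mapping.lookup (b C0) u"
      proof (cases "u \<in> T C0")
        case True
        have "\<forall>C\<in>P. a C \<in> cn C" "\<forall>C\<in>P. b C \<in> cn C" using ab by blast+
        then show ?thesis using lk[of a C0 u] lk[of b C0 u] ab C0 True by simp
      next
        case False
        have "a C0 \<in> cn C0" "b C0 \<in> cn C0" using ab C0 by blast+
        then have "u \<notin> Poly_Mapping.keys (a C0)" "u \<notin> Poly_Mapping.keys (b C0)" using False cP[OF C0] by blast+
        then show ?thesis by (simp add: in_keys_iff)
      qed
    qed
  qed
qed




lemma mcone_top:
  fixes j :: 'j
  shows "mcone ((0::'v \<Rightarrow>\<^sub>0 nat), j) UNIV = {w. snd w = j}"
proof (intro set_eqI iffI)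
  fix w :: "('v, 'j) fterm" assume "w \<in> {w. snd w = j}"
  then have "w = tshift (fst w) (0, j)" by (cases w) (simp add: tshift_def)
  then show "w \<in> mcone (0, j) UNIV" unfolding mcone_def by blast
qed (auto simp: mcone_def)

lemma single1_inj: "Poly_Mapping.single h (1::'k::zero_neq_one) = Poly_Mapping.single h' 1 \<Longrightarrow> h = h'"
proof (rule ccontr)
  assume a: "Poly_Mapping.single h (1::'k) = Poly_Mapping.single h' 1" "h \<noteq> h'"
  have "Poly_Mapping.lookup (Poly_Mapping.single h (1::'k)) h = 1" by simp
  moreover have "Poly_Mapping.lookup (Poly_Mapping.single h' (1::'k)) h = 0" using a(2) by (simp add: lookup_single_not_eq)
  ultimately show False using a(1) by simp
qed

lemma single1_nz[simp]: "Poly_Mapping.single h (1::'k::zero_neq_one) \<noteq> 0"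
proof
  assume "Poly_Mapping.single h (1::'k) = 0"
  then have "Poly_Mapping.lookup (Poly_Mapping.single h (1::'k)) h = 0" by simp
  then show False by simp
qed

lemma cone_deg_single: "cone_deg d (Poly_Mapping.single h (1::'k::zero_neq_one), U) = term_deg d h"
  by (simp add: cone_deg_def elem_deg_def)

theorem theorem4p7:
  fixes d :: "'j::finite \<Rightarrow> nat"
    and ord :: "('v::finite, 'j) fterm \<Rightarrow> ('v, 'j) fterm \<Rightarrow> bool"
    and M G :: "(('v, 'j) fterm \<Rightarrow>\<^sub>0 'k::field) set"
  assumes "graded_submodule d M"
    and "M \<noteq> UNIV"
    and "monomial_order ord"
    and "groebner_basis ord M G"
    and "\<forall>g\<in>G. homogeneous d g"
  shows "\<exists>Q. cone_decomp d (normal_space ord M) Q \<and> q_standard d (Max (range d)) Q \<and>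
     groebner_basis ord M {g\<in>G. elem_deg d g \<le> max (1 + decomp_deg d Q) (Max (range d))} \<and>
     (\<forall>Gr. reduced_groebner_basis ord M Gr \<longrightarrow>
        (\<forall>g\<in>Gr. elem_deg d g \<le> max (1 + decomp_deg d Q) (Max (range d))))"
proof -
  note gs = assms(1) and mo = assms(3) and gb = assms(4) and hom = assms(5)
  have sm: "is_submodule M" using gs by (simp add: graded_submodule_def)
  define I where "I = init_terms ord M"
  define L where "L = lt ord ` {g\<in>G. g \<noteq> 0}"
  define l where "l = Max (range d)"
  have GM: "G \<subseteq> M" "finite G" using gb by (auto simp: groebner_basis_def)
  have ltI: "lt ord f \<in> I" if "f \<in> M" "f \<noteq> 0" for f
    using that unfolding I_def init_terms_def by auto
  have IL: "I = {w. \<exists>u\<in>L. tdvd u w}"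
  proof (intro set_eqI iffI)
    fix w assume "w \<in> I"
    then obtain f where f: "f \<in> M" "f \<noteq> 0" "tdvd (lt ord f) w" by (auto simp: I_def init_terms_def)
    then obtain g where "g \<in> G" "g \<noteq> 0" "tdvd (lt ord g) (lt ord f)" using gb by (auto simp: groebner_basis_def)
    then show "w \<in> {w. \<exists>u\<in>L. tdvd u w}" using f(3) tdvd_trans unfolding L_def by blast
  next
    fix w assume "w \<in> {w. \<exists>u\<in>L. tdvd u w}"
    then show "w \<in> I" using GM unfolding L_def I_def init_terms_def by blast
  qed
  have finL: "finite L" using GM by (simp add: L_def)
  interpret m: mideal L I d l using finL IL by unfold_locales
  have "\<forall>j. \<exists>Q. m.SPLIT (0, j) UNIV Q" using m.split_exists by blast
  then obtain Qf where Qf: "\<And>j. m.SPLIT (0, j) UNIV (Qf j)" by metis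
  define Qm where "Qm = (\<Union>j. Qf j)"
  define \<phi> where "\<phi> = (\<lambda>C::(('v, 'j) fterm \<times> 'v set). (Poly_Mapping.single (fst C) (1::'k), snd C))"
  define Q where "Q = \<phi> ` Qm"
  have dl: "d j \<le> l" for j unfolding l_def by (rule Max_ge) auto
  have finQm: "finite Qm" unfolding Qm_def using m.SP_fin[OF Qf] by simp
  have inQm: "C \<in> Qm \<longleftrightarrow> C \<in> Qf (snd (fst C))" for C
  proof
    assume "C \<in> Qm"
    then obtain j where j: "C \<in> Qf j" by (auto simp: Qm_def)
    then have "fst C \<in> mcone (0, j) UNIV" using m.SP_sub[OF Qf j] by blast
    then have "snd (fst C) = j" by (simp add: mcone_top)
    then show "C \<in> Qf (snd (fst C))" using j by simp
  qed (auto simp: Qm_def)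
  have Csub: "mcone (fst C) (snd C) \<subseteq> mcone (0, snd (fst C)) UNIV - I" if "C \<in> Qm" for C
    using m.SP_coneI[OF Qf] that inQm by blast
  have disjQm: "mcone (fst C) (snd C) \<inter> mcone (fst C') (snd C') = {}"
    if "C \<in> Qm" "C' \<in> Qm" "C \<noteq> C'" for C C'
  proof (cases "snd (fst C) = snd (fst C')")
    case True
    then show ?thesis using m.SP_disj[OF Qf] that inQm by metis
  next
    case False
    show ?thesis
    proof (rule ccontr)
      assume "\<not> ?thesis"
      then obtain w where "w \<in> mcone (fst C) (snd C)" "w \<in> mcone (fst C') (snd C')" by blast
      then have "snd w = snd (fst C)" "snd w = snd (fst C')"
        using Csub[OF that(1)] Csub[OF that(2)] by (auto simp: mcone_top)
      then show False using False by simp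
    qed
  qed
  have unQm: "(\<Union>C\<in>Qm. mcone (fst C) (snd C)) = - I"
  proof (intro equalityI subsetI)
    fix w assume "w \<in> (\<Union>C\<in>Qm. mcone (fst C) (snd C))"
    then show "w \<in> - I" using Csub by blast
  next
    fix w assume w: "w \<in> - I"
    then have "w \<in> mcone (0, snd w) UNIV - I" by (simp add: mcone_top)
    then obtain C where "C \<in> Qf (snd w)" "w \<in> mcone (fst C) (snd C)" using m.SP_un[OF Qf] by blast
    then show "w \<in> (\<Union>C\<in>Qm. mcone (fst C) (snd C))" by (auto simp: Qm_def)
  qed
  have stdQm: "l \<le> m.dg (fst C) \<and> (\<forall>k. l \<le> k \<and> k \<le> m.dg (fst C) \<longrightarrow> (\<exists>C'\<in>Qm. m.dg (fst C') = k \<and> card (snd C) \<le> card (snd C')))"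
    if "C \<in> Qm" "card (snd C) > 0" for C
  proof -
    have C: "C \<in> Qf (snd (fst C))" using that inQm by blast
    have "m.dg (0, snd (fst C)) \<le> l" using dl by (simp add: term_deg_def mon_deg_def)
    then have mx: "max l (m.dg (0, snd (fst C))) = l" by (rule max_absorb1)
    note st = m.SP_std[OF Qf C that(2), unfolded mx]
    have sQ: "Qf (snd (fst C)) \<subseteq> Qm" by (auto simp: Qm_def)
    show ?thesis using st sQ by blast
  qed
  have inj: "inj_on \<phi> Qm" unfolding \<phi>_def
  proof (rule inj_onI)
    fix C C' :: "('v, 'j) fterm \<times> 'v set"
    assume "(Poly_Mapping.single (fst C) (1::'k), snd C) = (Poly_Mapping.single (fst C') 1, snd C')"
    then have "fst C = fst C'" "snd C = snd C'" by (auto dest: single1_inj)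
    then show "C = C'" by (simp add: prod_eq_iff)
  qed
  have cone_phi: "cone (\<phi> C) = {f. Poly_Mapping.keys f \<subseteq> mcone (fst C) (snd C)}" for C
    unfolding \<phi>_def by (rule cone_single)
  have cdeg: "cone_deg d (\<phi> C) = m.dg (fst C)" for C by (simp add: \<phi>_def cone_deg_single)
  have cdim: "cone_dim (\<phi> C) = card (snd C)" for C by (simp add: \<phi>_def cone_dim_def)
  have "\<exists>w. w \<notin> I"
  proof (rule ccontr)
    assume "\<not> (\<exists>w. w \<notin> I)"
    then have "\<forall>w. w \<in> init_terms ord M" by (simp add: I_def)
    then have "f \<in> M" for f using reduce_all[OF mo sm] by blast
    then show False using assms(2) by blast
  qed
  then have Qne: "Qm \<noteq> {}" using unQm by blast
  have degQ: "decomp_deg d Q = Max ((\<lambda>C. m.dg (fst C)) ` Qm)"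
    unfolding decomp_deg_def Q_def image_image cdeg ..
  have degle: "m.dg (fst C) \<le> decomp_deg d Q" if "C \<in> Qm" for C
    unfolding degQ using finQm that by (intro Max_ge) auto
  define B where "B = max (1 + decomp_deg d Q) l"
  have mingen: "m.dg w \<le> B" if w: "w \<in> I" "\<forall>v. tdvd v w \<and> v \<noteq> w \<longrightarrow> v \<notin> I" for w
  proof (cases "w = (0, snd w)")
    case True
    then have "m.dg w = d (snd w)" by (metis term_deg_def mon_deg_def Poly_Mapping.keys_zero sum.empty add_0 snd_conv fst_conv)
    then show ?thesis using dl[of "snd w"] by (simp add: B_def)
  next
    case False
    have "w \<in> mcone (0, snd w) UNIV" by (simp add: mcone_top)
    then obtain C where "C \<in> Qf (snd w)" "m.dg w \<le> m.dg (fst C) + 1"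
      using m.SP_E[OF Qf[of "snd w"]] w False by blast
    moreover have "C \<in> Qm" using \<open>C \<in> Qf (snd w)\<close> by (auto simp: Qm_def)
    ultimately show ?thesis using degle[of C] by (simp add: B_def)
  qed
  define T where "T C = mcone (fst (the_inv_into Qm \<phi> C)) (snd C)" for C
  have Tphi: "T (\<phi> C) = mcone (fst C) (snd C)" if "C \<in> Qm" for C
    unfolding T_def using the_inv_into_f_f[OF inj that] by (simp add: \<phi>_def)
  have DG: "\<forall>f. Poly_Mapping.keys f \<subseteq> - I \<longleftrightarrow> (\<exists>a. (\<forall>C\<in>Q. a C \<in> cone C) \<and> f = (\<Sum>C\<in>Q. a C))"
    and DU: "\<forall>a b. (\<forall>C\<in>Q. a C \<in> cone C \<and> b C \<in> cone C) \<and> (\<Sum>C\<in>Q. a C) = (\<Sum>C\<in>Q. b C) \<longrightarrow> (\<forall>C\<in>Q. a C = b C)"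
  proof -
    have fQ: "finite Q" using finQm by (simp add: Q_def)
    have cQ: "cone C = {f. Poly_Mapping.keys f \<subseteq> T C}" if "C \<in> Q" for C
      using that cone_phi Tphi by (auto simp: Q_def)
    have dQ: "T C \<inter> T C' = {}" if cc: "C \<in> Q" "C' \<in> Q" "C \<noteq> C'" for C C'
    proof -
      obtain C0 where "C0 \<in> Qm" "C = \<phi> C0" using cc(1) unfolding Q_def by blast
      moreover obtain C0' where "C0' \<in> Qm" "C' = \<phi> C0'" using cc(2) unfolding Q_def by blast
      ultimately show ?thesis using disjQm[of C0 C0'] Tphi cc(3) by auto
    qed
    have uQ: "(\<Union>C\<in>Q. T C) = - I" unfolding Q_def using Tphi unQm by simp
    show "\<forall>f. Poly_Mapping.keys f \<subseteq> - I \<longleftrightarrow> (\<exists>a. (\<forall>C\<in>Q. a C \<in> cone C) \<and> f = (\<Sum>C\<in>Q. a C))"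
      by (rule decomp_generic(1)[OF fQ cQ dQ uQ])
    show "\<forall>a b. (\<forall>C\<in>Q. a C \<in> cone C \<and> b C \<in> cone C) \<and> (\<Sum>C\<in>Q. a C) = (\<Sum>C\<in>Q. b C) \<longrightarrow> (\<forall>C\<in>Q. a C = b C)"
      by (rule decomp_generic(2)[OF fQ cQ dQ uQ])
  qed
  have CD: "cone_decomp d (normal_space ord M) Q"
    unfolding cone_decomp_def
  proof (intro conjI)
    show "finite Q" using finQm by (simp add: Q_def)
    show "\<forall>C\<in>Q. homogeneous d (fst C) \<and> fst C \<noteq> 0"
      by (auto simp: Q_def \<phi>_def homogeneous_def homog_of_def)
    have ns: "f \<in> normal_space ord M \<longleftrightarrow> Poly_Mapping.keys f \<subseteq> - I" for f
      by (auto simp: normal_space_def I_def)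
    show "\<forall>f. f \<in> normal_space ord M \<longleftrightarrow> (\<exists>a. (\<forall>C\<in>Q. a C \<in> cone C) \<and> f = (\<Sum>C\<in>Q. a C))"
      using DG ns by blast
    show "\<forall>a b. (\<forall>C\<in>Q. a C \<in> cone C \<and> b C \<in> cone C) \<and> (\<Sum>C\<in>Q. a C) = (\<Sum>C\<in>Q. b C) \<longrightarrow> (\<forall>C\<in>Q. a C = b C)"
      by (rule DU)
  qed
  have QS: "q_standard d l Q"
    unfolding q_standard_def
  proof (intro conjI ballI impI allI)
    fix C assume "C \<in> Q" "0 < cone_dim C"
    then obtain C0 where C0: "C0 \<in> Qm" "C = \<phi> C0" "card (snd C0) > 0" by (auto simp: Q_def cdim)
    show "l \<le> cone_deg d C" using stdQm[OF C0(1,3)] C0(2) cdeg by simp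
  next
    fix C k assume "C \<in> Q" "0 < cone_dim C" "l \<le> k \<and> k \<le> cone_deg d C"
    then obtain C0 where C0: "C0 \<in> Qm" "C = \<phi> C0" "card (snd C0) > 0" "l \<le> k" "k \<le> m.dg (fst C0)"
      by (auto simp: Q_def cdim cdeg)
    then obtain C0' where "C0' \<in> Qm" "m.dg (fst C0') = k" "card (snd C0) \<le> card (snd C0')"
      using stdQm[OF C0(1,3)] by blast
    then show "\<exists>C'\<in>Q. cone_deg d C' = k \<and> cone_dim C \<le> cone_dim C'"
      using C0(2) by (auto simp: Q_def cdim cdeg intro!: bexI[of _ "\<phi> C0'"])
  qed
  have ltG_min: "\<exists>g\<in>G. g \<noteq> 0 \<and> tdvd (lt ord g) w0 \<and> m.dg (lt ord g) \<le> B" if w0: "w0 \<in> I" for w0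
  proof -
    obtain w where w: "w \<in> I \<and> tdvd w w0" "\<forall>y. y \<in> I \<and> tdvd y w0 \<longrightarrow> m.dg w \<le> m.dg y"
      using ex_has_least_nat[of "\<lambda>w. w \<in> I \<and> tdvd w w0" w0 m.dg] w0 by auto
    have wmin: "\<forall>v. tdvd v w \<and> v \<noteq> w \<longrightarrow> v \<notin> I"
    proof (intro allI impI)
      fix v assume v: "tdvd v w \<and> v \<noteq> w"
      show "v \<notin> I"
      proof
        assume "v \<in> I"
        then have "m.dg w \<le> m.dg v" using w v tdvd_trans by blast
        moreover have "m.dg v \<le> m.dg w" using v tdvd_deg by blast
        ultimately show False using v tdvd_deg_eq by (metis le_antisym)
      qed
    qed
    obtain g where g: "g \<in> G" "g \<noteq> 0" "tdvd (lt ord g) w" using w(1) IL L_def by auto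
    have "lt ord g \<in> I" using IL L_def g by auto
    then have "lt ord g = w" using wmin g(3) by blast
    then show ?thesis using g w(1) mingen[OF _ wmin] tdvd_trans by auto
  qed
  have GB': "groebner_basis ord M {g\<in>G. elem_deg d g \<le> B}"
    unfolding groebner_basis_def
  proof (intro conjI ballI impI)
    show "finite {g\<in>G. elem_deg d g \<le> B}" using GM by simp
    show "{g\<in>G. elem_deg d g \<le> B} \<subseteq> M" using GM by auto
  next
    fix f assume f: "f \<in> M" "f \<noteq> 0"
    then obtain g where g: "g \<in> G" "g \<noteq> 0" "tdvd (lt ord g) (lt ord f)" "m.dg (lt ord g) \<le> B"
      using ltG_min ltI by blast
    obtain k where k: "homog_of d k g" using hom g(1) by (auto simp: homogeneous_def)
    have "lt ord g \<in> Poly_Mapping.keys g" using lt_prop[OF mo g(2)] by blast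
    then have "k = m.dg (lt ord g)" using k by (simp add: homog_of_def)
    then have "elem_deg d g = m.dg (lt ord g)" using elem_deg_homog[OF g(2)] k by (simp add: homog_of_def)
    then show "\<exists>g\<in>{g\<in>G. elem_deg d g \<le> B}. g \<noteq> 0 \<and> tdvd (lt ord g) (lt ord f)" using g by auto
  qed
  have RED: "\<forall>Gr. reduced_groebner_basis ord M Gr \<longrightarrow> (\<forall>g\<in>Gr. elem_deg d g \<le> B)"
  proof (intro allI impI ballI)
    fix Gr g assume rg: "reduced_groebner_basis ord M Gr" and gG: "g \<in> Gr"
    have gbr: "groebner_basis ord M Gr" and nz: "g \<noteq> 0"
      and red: "\<And>g'. g' \<in> Gr \<Longrightarrow> g' \<noteq> g \<Longrightarrow> (\<forall>u\<in>Poly_Mapping.keys g. \<not> tdvd (lt ord g') u)"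
      using rg gG unfolding reduced_groebner_basis_def by blast+
    have GrM: "Gr \<subseteq> M" using gbr by (simp add: groebner_basis_def)
    have inIGr: "\<exists>g'\<in>Gr. g' \<noteq> 0 \<and> tdvd (lt ord g') w" if wI: "w \<in> I" for w
    proof -
      obtain f where f: "f \<in> M" "f \<noteq> 0" "tdvd (lt ord f) w" using wI by (auto simp: I_def init_terms_def)
      then obtain g' where "g' \<in> Gr" "g' \<noteq> 0" "tdvd (lt ord g') (lt ord f)" using gbr by (auto simp: groebner_basis_def)
      then show ?thesis using f(3) tdvd_trans by blast
    qed
    note lg = lt_prop[OF mo nz]
    have gmin: "\<forall>v. tdvd v (lt ord g) \<and> v \<noteq> lt ord g \<longrightarrow> v \<notin> I"
    proof (intro allI impI notI)
      fix v assume v: "tdvd v (lt ord g) \<and> v \<noteq> lt ord g" and vI: "v \<in> I"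
      obtain g' where g': "g' \<in> Gr" "tdvd (lt ord g') v" using inIGr[OF vI] by blast
      show False
      proof (cases "g' = g")
        case True then show False using g' v tdvd_antisym by blast
      next
        case False then show False using red[OF g'(1) False] lg g' v tdvd_trans by blast
      qed
    qed
    have "lt ord g \<in> I" using ltI[OF _ nz] GrM gG by blast
    then have dB: "m.dg (lt ord g) \<le> B" using mingen gmin by blast
    define k where "k = m.dg (lt ord g)"
    define r where "r = g - hcomp d k g"
    have "hcomp d k g \<in> M" using gs GrM gG by (auto simp: graded_submodule_def)
    then have rM: "r \<in> M" unfolding r_def using sub_closed[OF sm] GrM gG by blast
    have lr: "Poly_Mapping.lookup r u = (if m.dg u = k then 0 else Poly_Mapping.lookup g u)" for u
      by (simp add: r_def lookup_minus lookup_hcomp)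
    have r0: "r = 0"
    proof (rule ccontr)
      assume rn: "r \<noteq> 0"
      note lrr = lt_prop[OF mo rn]
      have kr: "m.dg (lt ord r) \<noteq> k" "lt ord r \<in> Poly_Mapping.keys g"
        using lrr by (auto simp: in_keys_iff lr split: if_splits)
      have "lt ord r \<in> I" using ltI[OF rM rn] .
      then obtain g' where g': "g' \<in> Gr" "tdvd (lt ord g') (lt ord r)" using inIGr by blast
      show False
      proof (cases "g' = g")
        case False then show False using red[OF g'(1) False] kr g' by blast
      next
        case True
        then obtain t where t: "lt ord r = tshift t (lt ord g)" using g' by (auto simp: tdvd_def)
        have "t \<noteq> 0" using t kr(1) k_def by auto
        then have o1: "ord (lt ord g) (lt ord r)" unfolding t using mono_props(6)[OF mo] by blast
        have "lt ord r \<noteq> lt ord g" using kr(1) k_def by auto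
        then have o2: "ord (lt ord r) (lt ord g)" using lg kr(2) by blast
        show False using o1 o2 mono_props(1,2)[OF mo] by blast
      qed
    qed
    have "\<forall>u\<in>Poly_Mapping.keys g. m.dg u = k"
    proof
      fix u assume "u \<in> Poly_Mapping.keys g"
      then show "m.dg u = k" using lr[of u] r0 by (auto simp: in_keys_iff split: if_splits)
    qed
    then have "elem_deg d g = k" by (rule elem_deg_homog[OF nz])
    then show "elem_deg d g \<le> B" using dB k_def by simp
  qed
  show ?thesis unfolding l_def[symmetric]
    using CD QS GB' RED unfolding B_def by blast
qed


end
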